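(* Let $\mathcal{M}$ be a matroid on $[n]$, $J=J(\mathcal{M})$, and let $v$ be a vertex with $\{v\}$ independent in $\mathcal{M}$. Let $N\in G(J)$ with $x_v\mid N$. For every $\ell\ge1$ and every $L\in G\big(SF_\ell(J(\mathcal{M}/v):N)\big)$, we have $LN\in G(SF_{\ell+1}(J))$.
   Context: $R=\mathbb{K}[x_1,\ldots,x_n]$, $\mathbb{K}$ a field. For a matroid $\mathcal{N}$ on $E\subseteq[n]$, $J(\mathcal{N})=\bigcap_{F\in\mathcal{B}(\mathcal{N})}(x_i:i\in F)$, formed in $\mathbb{K}[x_i:i\in E]$ and extended to $R$. $\mathcal{M}/v$ is the contraction by $\{v\}$. $G(\cdot)$ denotes minimal monomial generators. For a squarefree monomial ideal $I$ with minimal primes $\mathfrak q_j$, $I^{(\ell)}=\bigcap\mathfrak q_j^\ell$ and $SF_\ell(I)$ is the ideal generated by the squarefree monomials in $I^{(\ell)}$. *)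

theory Defs
  imports Main
begin

text \<open>Monomials of R = K[x_1,...,x_n] are represented by exponent vectors
  (functions nat => nat supported in {1..n}). Every ideal occurring in the
  statement is a monomial ideal, which we represent by the set of monomials
  it contains (a monomial ideal is determined by this set, independently of K).\<close>

type_synonym monomial = "nat \<Rightarrow> nat"

definition is_mono :: "nat \<Rightarrow> monomial \<Rightarrow> bool" where
  "is_mono n m \<longleftrightarrow> (\<forall>i. m i \<noteq> 0 \<longrightarrow> i \<in> {1..n})"

definition mdvd :: "monomial \<Rightarrow> monomial \<Rightarrow> bool" where
  "mdvd a b \<longleftrightarrow> (\<forall>i. a i \<le> b i)"

definition mmult :: "monomial \<Rightarrow> monomial \<Rightarrow> monomial" where
  "mmult a b = (\<lambda>i. a i + b i)"

definition squarefree_mono :: "monomial \<Rightarrow> bool" where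
  "squarefree_mono m \<longleftrightarrow> (\<forall>i. m i \<le> 1)"

definition mingens :: "nat \<Rightarrow> monomial set \<Rightarrow> monomial set" where
  "mingens n I = {m. is_mono n m \<and> m \<in> I \<and>
      (\<forall>m'. is_mono n m' \<and> m' \<in> I \<and> mdvd m' m \<longrightarrow> m' = m)}"

definition prime_mon :: "nat \<Rightarrow> nat set \<Rightarrow> monomial set" where
  "prime_mon n C = {m. is_mono n m \<and> (\<exists>i\<in>C. m i \<noteq> 0)}"

definition prime_pow_mon :: "nat \<Rightarrow> nat set \<Rightarrow> nat \<Rightarrow> monomial set" where
  "prime_pow_mon n C l = {m. is_mono n m \<and> (\<Sum>i\<in>C. m i) \<ge> l}"

text \<open>Minimal primes of a monomial ideal: the minimal monomial primes containing it.\<close>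
definition min_prime_sets :: "nat \<Rightarrow> monomial set \<Rightarrow> nat set set" where
  "min_prime_sets n I = {C. C \<subseteq> {1..n} \<and> I \<subseteq> prime_mon n C \<and>
      (\<forall>D. D \<subseteq> C \<and> I \<subseteq> prime_mon n D \<longrightarrow> D = C)}"

definition symb_pow :: "nat \<Rightarrow> nat \<Rightarrow> monomial set \<Rightarrow> monomial set" where
  "symb_pow n l I = {m. is_mono n m \<and> (\<forall>C\<in>min_prime_sets n I. m \<in> prime_pow_mon n C l)}"

definition SF :: "nat \<Rightarrow> nat \<Rightarrow> monomial set \<Rightarrow> monomial set" where
  "SF n l I = {m. is_mono n m \<and>
      (\<exists>s. s \<in> symb_pow n l I \<and> squarefree_mono s \<and> mdvd s m)}"

definition colon :: "nat \<Rightarrow> monomial set \<Rightarrow> monomial \<Rightarrow> monomial set" where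
  "colon n I N = {m. is_mono n m \<and> mmult m N \<in> I}"

definition matroid_bases :: "nat set \<Rightarrow> nat set set \<Rightarrow> bool" where
  "matroid_bases E B \<longleftrightarrow> finite E \<and> B \<noteq> {} \<and> (\<forall>F\<in>B. F \<subseteq> E) \<and>
     (\<forall>F1\<in>B. \<forall>F2\<in>B. \<forall>x\<in>F1 - F2. \<exists>y\<in>F2 - F1. insert y (F1 - {x}) \<in> B)"

definition indep :: "nat set set \<Rightarrow> nat set \<Rightarrow> bool" where
  "indep B X \<longleftrightarrow> (\<exists>F\<in>B. X \<subseteq> F)"

text \<open>Bases of the contraction M/v (if v is a loop, M/v = M \ v has the same bases).\<close>
definition contract_bases :: "nat set set \<Rightarrow> nat \<Rightarrow> nat set set" where
  "contract_bases B v = (if (\<exists>F\<in>B. v \<in> F) then {F - {v} | F. F \<in> B \<and> v \<in> F} else B)"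

text \<open>J(M) = intersection over bases F of (x_i : i in F), extended to R.\<close>
definition Jm :: "nat \<Rightarrow> nat set set \<Rightarrow> monomial set" where
  "Jm n B = {m. is_mono n m \<and> (\<forall>F\<in>B. \<exists>i\<in>F. m i \<noteq> 0)}"

end

theory Submission
  imports Defs
begin

definition sq :: "nat set \<Rightarrow> monomial" where
  "sq S = (\<lambda>i. if i \<in> S then 1 else 0)"

lemma sq_supp: "squarefree_mono m \<Longrightarrow> m = sq {i. m i \<noteq> 0}"
proof (rule ext)
  fix i assume "squarefree_mono m"
  then have "m i \<le> 1" unfolding squarefree_mono_def by auto
  then show "m i = sq {i. m i \<noteq> 0} i" unfolding sq_def by (cases "m i = 0") auto
qed

lemma is_mono_sq: "S \<subseteq> {1..n} \<Longrightarrow> is_mono n (sq S)"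
  unfolding is_mono_def sq_def by auto

lemma sq_squarefree: "squarefree_mono (sq S)"
  by (simp add: squarefree_mono_def sq_def)

lemma mdvd_sq: "mdvd (sq A) (sq B) \<longleftrightarrow> A \<subseteq> B"
  unfolding mdvd_def sq_def
  by (auto split: if_splits)

lemma sq_inj: "sq A = sq B \<Longrightarrow> A = B"
  by (metis mdvd_sq mdvd_def order_refl subset_antisym)

lemma sum_sq: "finite A \<Longrightarrow> (\<Sum>i\<in>A. sq S i) = card (A \<inter> S)"
  unfolding sq_def by (simp add: sum.If_cases Int_def)

lemma min_prime_fin: "C' \<in> min_prime_sets n I \<Longrightarrow> finite C'"
  unfolding min_prime_sets_def using finite_subset by blast

lemma min_prime_in:
  assumes "C' \<in> min_prime_sets n (Jm n A)" "\<forall>X\<in>A. X \<subseteq> {1..n}"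
  shows "C' \<in> A"
proof -
  have C'n: "C' \<subseteq> {1..n}" and sub: "Jm n A \<subseteq> prime_mon n C'"
    and mn: "\<And>D. D \<subseteq> C' \<Longrightarrow> Jm n A \<subseteq> prime_mon n D \<Longrightarrow> D = C'"
    using assms(1) unfolding min_prime_sets_def by auto
  have "\<exists>X\<in>A. X \<subseteq> C'"
  proof (rule ccontr)
    assume no: "\<not> ?thesis"
    let ?m = "sq ({1..n} - C')"
    have "?m \<in> Jm n A"
      unfolding Jm_def
    proof (intro CollectI conjI ballI)
      show "is_mono n ?m" by (rule is_mono_sq) auto
      fix X assume "X \<in> A"
      with no obtain i where "i \<in> X" "i \<notin> C'" by auto
      moreover have "i \<in> {1..n}" using \<open>X\<in>A\<close> \<open>i\<in>X\<close> assms(2) by blast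
      ultimately show "\<exists>i\<in>X. ?m i \<noteq> 0" unfolding sq_def by auto
    qed
    with sub have "?m \<in> prime_mon n C'" by auto
    then show False unfolding prime_mon_def sq_def by auto
  qed
  then obtain X where "X \<in> A" "X \<subseteq> C'" by auto
  moreover have "Jm n A \<subseteq> prime_mon n X"
    using \<open>X\<in>A\<close> unfolding Jm_def prime_mon_def by auto
  ultimately show ?thesis using mn by metis
qed

lemma min_prime_exists:
  assumes "X \<in> A" "X \<subseteq> {1..n}"
  shows "\<exists>C'\<in>min_prime_sets n (Jm n A). C' \<subseteq> X"
proof -
  let ?Q = "{D. D \<subseteq> X \<and> Jm n A \<subseteq> prime_mon n D}"
  have "X \<in> ?Q" using assms(1) unfolding Jm_def prime_mon_def by auto
  obtain D where D: "D \<in> ?Q" and least: "\<And>D'. D' \<in> ?Q \<Longrightarrow> card D \<le> card D'"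
    using ex_has_least_nat[of "\<lambda>D. D \<in> ?Q" X card] \<open>X \<in> ?Q\<close> by blast
  have fin: "finite D" using D assms(2) finite_subset by (metis (no_types, lifting) finite_atLeastAtMost mem_Collect_eq subset_trans)
  have "D \<in> min_prime_sets n (Jm n A)"
    unfolding min_prime_sets_def
  proof (intro CollectI conjI allI impI)
    show "D \<subseteq> {1..n}" using D assms(2) by auto
    show "Jm n A \<subseteq> prime_mon n D" using D by auto
    fix D' assume "D' \<subseteq> D \<and> Jm n A \<subseteq> prime_mon n D'"
    then have "D' \<in> ?Q" "D' \<subseteq> D" using D by auto
    then show "D' = D" using least[of D'] fin by (meson card_seteq)
  qed
  then show ?thesis using D by auto
qed

lemma symb_pow_sq:
  assumes "S \<subseteq> {1..n}"
  shows "sq S \<in> symb_pow n l I \<longleftrightarrow> (\<forall>C'\<in>min_prime_sets n I. l \<le> card (C' \<inter> S))"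
proof -
  have "\<And>C'. C' \<in> min_prime_sets n I \<Longrightarrow> (\<Sum>i\<in>C'. sq S i) = card (C' \<inter> S)"
    using sum_sq min_prime_fin by blast
  then show ?thesis
    unfolding symb_pow_def prime_pow_mon_def using is_mono_sq[OF assms(1)]
    by (simp cong: ball_cong)
qed

lemma mingens_SF:
  assumes "L \<in> mingens n (SF n l I)"
  shows "squarefree_mono L" "L \<in> symb_pow n l I"
    "\<And>s. s \<in> symb_pow n l I \<Longrightarrow> squarefree_mono s \<Longrightarrow> mdvd s L \<Longrightarrow> s = L"
proof -
  have inSF: "L \<in> SF n l I"
    and mn: "\<And>m'. is_mono n m' \<Longrightarrow> m' \<in> SF n l I \<Longrightarrow> mdvd m' L \<Longrightarrow> m' = L"
    using assms unfolding mingens_def by auto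
  have key: "s = L" if "s \<in> symb_pow n l I" "squarefree_mono s" "mdvd s L" for s
  proof -
    have "is_mono n s" using that(1) unfolding symb_pow_def by auto
    moreover have "s \<in> SF n l I" unfolding SF_def using that \<open>is_mono n s\<close> by (auto simp: mdvd_def)
    ultimately show ?thesis using mn that(3) by auto
  qed
  from inSF obtain s where s: "s \<in> symb_pow n l I" "squarefree_mono s" "mdvd s L"
    unfolding SF_def by auto
  with key have "s = L" by auto
  then show "squarefree_mono L" "L \<in> symb_pow n l I" using s by auto
  show "\<And>s. s \<in> symb_pow n l I \<Longrightarrow> squarefree_mono s \<Longrightarrow> mdvd s L \<Longrightarrow> s = L" using key by auto
qed

lemma mingens_J:
  assumes "N \<in> mingens n (Jm n B)"
  shows "N = sq {i. N i \<noteq> 0}" "{i. N i \<noteq> 0} \<subseteq> {1..n}"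
    "\<forall>F\<in>B. F \<inter> {i. N i \<noteq> 0} \<noteq> {}"
    "\<forall>c\<in>{i. N i \<noteq> 0}. \<exists>F\<in>B. F \<inter> {i. N i \<noteq> 0} = {c}"
proof -
  define C where "C = {i. N i \<noteq> 0}"
  have mono: "is_mono n N" and inJ: "N \<in> Jm n B"
    and mn: "\<And>m'. is_mono n m' \<Longrightarrow> m' \<in> Jm n B \<Longrightarrow> mdvd m' N \<Longrightarrow> m' = N"
    using assms unfolding mingens_def by auto
  show Cn: "{i. N i \<noteq> 0} \<subseteq> {1..n}" using mono unfolding is_mono_def by auto
  show meet: "\<forall>F\<in>B. F \<inter> {i. N i \<noteq> 0} \<noteq> {}" using inJ unfolding Jm_def by auto
  have "sq C \<in> Jm n B" unfolding Jm_def using is_mono_sq[of C n] Cn meet C_def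
    by (auto simp: sq_def)
  moreover have "mdvd (sq C) N" unfolding mdvd_def sq_def C_def by auto
  ultimately show Nsq: "N = sq {i. N i \<noteq> 0}" using mn is_mono_sq[of C n] Cn C_def by metis
  show "\<forall>c\<in>{i. N i \<noteq> 0}. \<exists>F\<in>B. F \<inter> {i. N i \<noteq> 0} = {c}"
  proof
    fix c assume c: "c \<in> {i. N i \<noteq> 0}"
    let ?m = "sq (C - {c})"
    have m1: "is_mono n ?m" using is_mono_sq[of "C - {c}" n] Cn C_def by auto
    have m2: "mdvd ?m N" using Nsq mdvd_sq[of "C - {c}" C] C_def by auto
    have "?m \<noteq> N" using c by (auto simp: sq_def)
    then have "?m \<notin> Jm n B" using mn m1 m2 by auto
    then obtain F where F: "F \<in> B" "\<forall>i\<in>F. ?m i = 0" using m1 unfolding Jm_def by auto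
    have "x \<notin> F" if "x \<in> C - {c}" for x using F(2) that by (force simp: sq_def)
    then have "F \<inter> (C - {c}) = {}" by auto
    moreover have "F \<inter> C \<noteq> {}" using meet F C_def by auto
    ultimately have "F \<inter> C = {c}" by auto
    then show "\<exists>F\<in>B. F \<inter> {i. N i \<noteq> 0} = {c}" using F C_def by auto
  qed
qed


lemma mmult_sq: "A \<inter> B = {} \<Longrightarrow> mmult (sq A) (sq B) = sq (A \<union> B)"
  unfolding mmult_def sq_def by (rule ext) auto

theorem corollary4p15:
  fixes n v l :: nat and B :: "nat set set" and N L :: monomial
  assumes "matroid_bases {1..n} B"
    and "indep B {v}"
    and "N \<in> mingens n (Jm n B)"
    and "N v \<noteq> 0"
    and "l \<ge> 1"
    and "L \<in> mingens n (SF n l (colon n (Jm n (contract_bases B v)) N))"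
  shows "mmult L N \<in> mingens n (SF n (l + 1) (Jm n B))"
proof -
  define C where "C = {i. N i \<noteq> 0}"
  note NJ = mingens_J[OF assms(3), folded C_def]
  have Nsq: "N = sq C" and Cn: "C \<subseteq> {1..n}" and meet: "\<And>F. F\<in>B \<Longrightarrow> F\<inter>C \<noteq> {}"
    and sing: "\<And>c. c\<in>C \<Longrightarrow> \<exists>F\<in>B. F\<inter>C = {c}" using NJ by auto
  have vC: "v \<in> C" using assms(4) C_def by auto
  have Bn: "\<And>F. F \<in> B \<Longrightarrow> F \<subseteq> {1..n}"
    and exch: "\<And>F1 F2 x. F1\<in>B \<Longrightarrow> F2\<in>B \<Longrightarrow> x\<in>F1-F2 \<Longrightarrow> \<exists>y\<in>F2-F1. insert y (F1-{x}) \<in> B"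
    using assms(1) unfolding matroid_bases_def by auto
  have finB: "\<And>F. F \<in> B \<Longrightarrow> finite F" using Bn finite_subset by blast
  obtain F2 where F2: "F2 \<in> B" "F2 \<inter> C = {v}" using sing vC by blast
  define GG where "GG = {F - {v} | F. F \<in> B \<and> F \<inter> C = {v}}"
  have GGn: "\<forall>X\<in>GG. X \<subseteq> {1..n}" using Bn by (auto simp: GG_def)
  have GGC: "\<And>A. A\<in>GG \<Longrightarrow> A \<inter> C = {}" by (auto simp: GG_def)
  have contr: "contract_bases B v = {F - {v} | F. F \<in> B \<and> v \<in> F}"
    using F2 unfolding contract_bases_def by auto
  have colon_eq: "colon n (Jm n (contract_bases B v)) N = Jm n GG"
  proof (rule set_eqI)
    fix m
    show "m \<in> colon n (Jm n (contract_bases B v)) N \<longleftrightarrow> m \<in> Jm n GG"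
    proof
      assume "m \<in> colon n (Jm n (contract_bases B v)) N"
      then have m1: "is_mono n m" and m2: "\<And>F. F\<in>B \<Longrightarrow> v \<in> F \<Longrightarrow> \<exists>i\<in>F-{v}. m i + N i \<noteq> 0"
        unfolding colon_def Jm_def contr mmult_def by auto
      show "m \<in> Jm n GG" unfolding Jm_def
      proof (intro CollectI conjI ballI)
        show "is_mono n m" by (rule m1)
        fix X assume "X \<in> GG"
        then obtain F where F: "X = F - {v}" "F \<in> B" "F \<inter> C = {v}" unfolding GG_def by auto
        then obtain i where i: "i \<in> F - {v}" "m i + N i \<noteq> 0" using m2 by auto
        have "i \<notin> C" using i F by blast
        then have "N i = 0" unfolding C_def by simp
        then show "\<exists>i\<in>X. m i \<noteq> 0" using i F by auto
      qed
    next
      assume "m \<in> Jm n GG"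
      then have m1: "is_mono n m" and m2: "\<And>X. X \<in> GG \<Longrightarrow> \<exists>i\<in>X. m i \<noteq> 0"
        unfolding Jm_def by blast+
      have mono: "is_mono n N" using assms(3) unfolding mingens_def by auto
      have mmono: "is_mono n (mmult m N)" using m1 mono unfolding is_mono_def mmult_def
        by (metis add_is_0)
      have ex: "\<exists>i\<in>F - {v}. mmult m N i \<noteq> 0" if F: "F \<in> B" "v \<in> F" for F
      proof (cases "\<exists>i\<in>F - {v}. i \<in> C")
        case True
        then obtain i where i: "i \<in> F - {v}" "i \<in> C" by blast
        then have "N i \<noteq> 0" unfolding C_def by simp
        then have "mmult m N i \<noteq> 0" unfolding mmult_def by simp
        then show ?thesis using i by blast
      next
        case False
        then have "F \<inter> C = {v}" using F vC by auto
        then have "F - {v} \<in> GG" using F unfolding GG_def by auto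
        then obtain i where i: "i \<in> F - {v}" "m i \<noteq> 0" using m2 by blast
        then have "mmult m N i \<noteq> 0" unfolding mmult_def by simp
        then show ?thesis using i by blast
      qed
      have "mmult m N \<in> Jm n (contract_bases B v)"
        unfolding Jm_def contr
      proof (intro CollectI conjI ballI)
        show "is_mono n (mmult m N)" by (rule mmono)
        fix X assume "X \<in> {F - {v} |F. F \<in> B \<and> v \<in> F}"
        then obtain F where "X = F - {v}" "F \<in> B" "v \<in> F" by blast
        then show "\<exists>i\<in>X. mmult m N i \<noteq> 0" using ex by blast
      qed
      then show "m \<in> colon n (Jm n (contract_bases B v)) N"
        unfolding colon_def using m1 by blast
    qed
  qed
  define P where "P = min_prime_sets n (Jm n GG)"
  have P_GG: "A \<in> GG" if "A\<in>P" for A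
    using min_prime_in[OF _ GGn] that unfolding P_def by blast
  have GG_P: "\<exists>A\<in>P. A \<subseteq> X" if "X\<in>GG" for X
    using min_prime_exists[OF that bspec[OF GGn that]] unfolding P_def .
  have L6: "L \<in> mingens n (SF n l (Jm n GG))" using assms(6) unfolding colon_eq .
  note LS = mingens_SF[OF L6]
  define T where "T = {i. L i \<noteq> 0}"
  have Lsq: "L = sq T" unfolding T_def by (rule sq_supp[OF LS(1)])
  have "is_mono n L" using LS(2) unfolding symb_pow_def by blast
  then have Tn: "T \<subseteq> {1..n}" unfolding is_mono_def T_def by blast
  have "sq T \<in> symb_pow n l (Jm n GG)" using LS(2) unfolding Lsq .
  then have Tsp: "\<forall>A\<in>P. l \<le> card (A \<inter> T)" using symb_pow_sq[OF Tn] unfolding P_def by blast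
  have Tmin: "T' = T" if "T' \<subseteq> T" "\<forall>A\<in>P. l \<le> card (A \<inter> T')" for T'
  proof -
    have "T' \<subseteq> {1..n}" using that Tn by blast
    then have i1: "sq T' \<in> symb_pow n l (Jm n GG)" using symb_pow_sq that(2) unfolding P_def by blast
    have i2: "mdvd (sq T') L" unfolding Lsq mdvd_sq using that(1) .
    have "sq T' = L" by (rule LS(3)[OF i1 sq_squarefree i2])
    then have "sq T' = sq T" using Lsq by simp
    then show ?thesis by (rule sq_inj)
  qed
  have TC: "T \<inter> C = {}"
  proof (rule ccontr)
    assume "T \<inter> C \<noteq> {}"
    then obtain c where c: "c \<in> T" "c \<in> C" by auto
    have "\<forall>A\<in>P. l \<le> card (A \<inter> (T - {c}))"
    proof
      fix A assume "A \<in> P"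
      then have "A \<inter> (T - {c}) = A \<inter> T" using GGC P_GG c by blast
      then show "l \<le> card (A \<inter> (T - {c}))" using Tsp \<open>A\<in>P\<close> by simp
    qed
    then have "T - {c} = T" using Tmin by blast
    then show False using c by auto
  qed
  define S where "S = T \<union> C"
  have LN: "mmult L N = sq S" using Lsq Nsq TC mmult_sq S_def by simp
  have Sn: "S \<subseteq> {1..n}" using Tn Cn S_def by auto
  define PJ where "PJ = min_prime_sets n (Jm n B)"
  have Bn': "\<forall>X\<in>B. X \<subseteq> {1..n}" using Bn by blast
  have PJ_B: "A \<in> B" if "A\<in>PJ" for A
    using min_prime_in[OF _ Bn'] that unfolding PJ_def by blast
  have B_PJ: "\<exists>A\<in>PJ. A \<subseteq> X" if "X\<in>B" for X
    using min_prime_exists[OF that Bn[OF that]] unfolding PJ_def .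
  have red: "\<forall>F. F\<in>B \<longrightarrow> card (F - F2) = k \<longrightarrow> (\<exists>F'\<in>B. F'\<inter>C = {v} \<and> card (F'\<inter>S) \<le> card (F\<inter>S))" for k
  proof (induction k rule: less_induct)
    case (less k)
    show ?case
    proof (intro allI impI)
      fix F assume F: "F\<in>B" "card (F - F2) = k"
      have finF: "finite F" using finB F(1) by blast
      show "\<exists>F'\<in>B. F'\<inter>C = {v} \<and> card (F'\<inter>S) \<le> card (F\<inter>S)"
      proof (cases "F\<inter>C = {v}")
        case True then show ?thesis using F by auto
      next
        case False
        then obtain x where x: "x\<in>F" "x\<in>C" "x\<noteq>v" using meet[OF F(1)] by blast
        then have xF2: "x \<notin> F2" using F2 by auto
        then obtain y where y: "y\<in>F2" "y\<notin>F" and F1: "insert y (F - {x}) \<in> B"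
          using exch[OF F(1) F2(1), of x] x by auto
        let ?F1 = "insert y (F-{x})"
        have "?F1 - F2 = (F - F2) - {x}" using y x xF2 by auto
        moreover have "card ((F - F2) - {x}) < card (F - F2)"
          by (rule card_Diff1_less) (use finF x xF2 in auto)
        ultimately have "card (?F1 - F2) < k" using F(2) by simp
        then obtain F' where F': "F'\<in>B" "F'\<inter>C={v}" "card(F'\<inter>S) \<le> card(?F1\<inter>S)"
          using less.IH F1 by blast
        have "card(?F1\<inter>S) \<le> card(F\<inter>S)"
        proof -
          have "?F1\<inter>S \<subseteq> insert y ((F\<inter>S) - {x})" by auto
          then have "card(?F1\<inter>S) \<le> card (insert y ((F\<inter>S) - {x}))"
            by (rule card_mono[rotated]) (simp add: finF)
          also have "\<dots> \<le> Suc (card ((F\<inter>S)-{x}))" by (simp add: card_insert_if finF)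
          also have "\<dots> = card (F\<inter>S)"
          proof -
            have xFS: "x \<in> F\<inter>S" using x unfolding S_def by blast
            have fFS: "finite (F\<inter>S)" using finF by blast
            have "card (F\<inter>S) > 0" using xFS fFS card_gt_0_iff by blast
            moreover have "card ((F\<inter>S)-{x}) = card (F\<inter>S) - 1" using xFS by (rule card_Diff_singleton)
            ultimately show ?thesis by simp
          qed
          finally show ?thesis .
        qed
        then show ?thesis using F' by (meson le_trans)
      qed
    qed
  qed
  have fwd: "l + 1 \<le> card (F \<inter> S)" if F: "F \<in> B" for F
  proof -
    obtain F' where F': "F'\<in>B" "F'\<inter>C = {v}" "card (F'\<inter>S) \<le> card (F\<inter>S)" using red F by blast
    have "F' - {v} \<in> GG" using F'(1,2) unfolding GG_def by blast
    then obtain A where A: "A \<in> P" "A \<subseteq> F' - {v}" using GG_P by blast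
    have "l \<le> card (A \<inter> T)" using Tsp A(1) by blast
    have "v \<in> F'" using F'(2) by blast
    then have sub: "insert v (A \<inter> T) \<subseteq> F' \<inter> S" using A(2) vC unfolding S_def by blast
    have "finite (F' \<inter> S)" using finB[OF F'(1)] by blast
    then have "card (insert v (A \<inter> T)) \<le> card (F' \<inter> S)" using sub card_mono by blast
    moreover have "card (insert v (A \<inter> T)) = Suc (card (A \<inter> T))"
    proof -
      have "finite (A \<inter> T)" using A(2) finB[OF F'(1)] finite_subset by blast
      moreover have "v \<notin> A \<inter> T" using A(2) by blast
      ultimately show ?thesis by simp
    qed
    ultimately show ?thesis using \<open>l \<le> card (A \<inter> T)\<close> F' by linarith
  qed
  have "F2 - {v} \<in> GG" using F2 unfolding GG_def by blast
  then have Pne: "P \<noteq> {}" using GG_P by blast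
  have Tne: "T \<noteq> {}"
  proof
    assume "T = {}"
    obtain A where "A \<in> P" using Pne by blast
    then have "l \<le> card (A \<inter> T)" using Tsp by blast
    then show False using \<open>T = {}\<close> assms(5) by simp
  qed
  have key: "\<exists>F'\<in>B. F'\<inter>C={v} \<and> card ((F'-{v}) \<inter> (T - {t})) < l \<and> card ((F'-{v}) \<inter> T) \<le> l"
    if t: "t \<in> T" for t
  proof -
    have "T - {t} \<noteq> T" using t by blast
    moreover have "T - {t} \<subseteq> T" by blast
    ultimately have "\<not> (\<forall>A\<in>P. l \<le> card (A \<inter> (T - {t})))" using Tmin[of "T - {t}"] by metis
    then obtain A where A: "A \<in> P" "card (A \<inter> (T - {t})) < l"
      using not_le by blast
    have "A \<in> GG" using P_GG A(1) .
    then obtain F' where F': "A = F' - {v}" "F' \<in> B" "F' \<inter> C = {v}" unfolding GG_def by blast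
    have finA: "finite (A \<inter> (T - {t}))" using finB[OF F'(2)] unfolding F'(1) by simp
    have "A \<inter> T \<subseteq> insert t (A \<inter> (T - {t}))" by blast
    then have "card (A \<inter> T) \<le> card (insert t (A \<inter> (T - {t})))" using card_mono[OF finite.insertI[OF finA]] by blast
    also have "\<dots> \<le> Suc (card (A \<inter> (T - {t})))" by (simp add: card_insert_if finA)
    finally have "card (A \<inter> T) \<le> l" using A(2) by linarith
    then show ?thesis using A(2) F' by (intro bexI[of _ F']) auto
  qed
  have bwd: "\<exists>F\<in>B. card (F \<inter> (S - {e})) \<le> l" if e: "e \<in> S" for e
  proof (cases "e \<in> T")
    case True
    obtain F' where F': "F'\<in>B" "F'\<inter>C={v}" "card ((F'-{v}) \<inter> (T - {e})) < l"
      using key[OF True] by blast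
    have finA: "finite ((F'-{v}) \<inter> (T - {e}))" using finB[OF F'(1)] by simp
    have "F' \<inter> (S - {e}) \<subseteq> insert v ((F'-{v}) \<inter> (T - {e}))"
    proof
      fix z assume z: "z \<in> F' \<inter> (S - {e})"
      show "z \<in> insert v ((F'-{v}) \<inter> (T - {e}))"
      proof (cases "z = v")
        case False
        then have "z \<notin> C" using z F'(2) by blast
        then show ?thesis using z unfolding S_def by blast
      qed simp
    qed
    then have "card (F' \<inter> (S - {e})) \<le> card (insert v ((F'-{v}) \<inter> (T - {e})))"
      using card_mono[OF finite.insertI[OF finA]] by blast
    also have "\<dots> \<le> Suc (card ((F'-{v}) \<inter> (T - {e})))" by (simp add: card_insert_if finA)
    finally have "card (F' \<inter> (S - {e})) \<le> l" using F'(3) by linarith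
    then show ?thesis using F'(1) by blast
  next
    case False
    then have eC: "e \<in> C" using e unfolding S_def by blast
    obtain t where t: "t \<in> T" using Tne by blast
    obtain F' where F': "F'\<in>B" "F'\<inter>C={v}" "card ((F'-{v}) \<inter> T) \<le> l"
      using key[OF t] by blast
    have vF': "v \<in> F'" using F'(2) by blast
    have FB: "insert e (F' - {v}) \<in> B"
    proof (cases "e = v")
      case True
      then have "insert e (F' - {v}) = F'" using vF' by blast
      then show ?thesis using F'(1) by simp
    next
      case False
      obtain F0 where F0: "F0 \<in> B" "F0 \<inter> C = {e}" using sing eC by blast
      have "v \<notin> F0"
      proof
        assume "v \<in> F0"
        then have "v \<in> F0 \<inter> C" using vC by blast
        then show False using F0(2) False by simp
      qed
      then have "v \<in> F' - F0" using vF' by blast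
      then obtain y where y: "y \<in> F0 - F'" "insert y (F' - {v}) \<in> B"
        using exch[OF F'(1) F0(1)] by blast
      have "y \<in> C"
      proof (rule ccontr)
        assume "y \<notin> C"
        then have "insert y (F' - {v}) \<inter> C = {}" using F'(2) by blast
        then show False using meet[OF y(2)] by blast
      qed
      then have "y = e" using y(1) F0(2) by blast
      then show ?thesis using y(2) by simp
    qed
    have "insert e (F' - {v}) \<inter> (S - {e}) \<subseteq> (F'-{v}) \<inter> T"
    proof
      fix z assume z: "z \<in> insert e (F' - {v}) \<inter> (S - {e})"
      then have "z \<in> F' - {v}" by blast
      then have "z \<notin> C" using F'(2) by blast
      then show "z \<in> (F'-{v}) \<inter> T" using z unfolding S_def by blast
    qed
    moreover have "finite ((F'-{v}) \<inter> T)" using finB[OF F'(1)] by simp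
    ultimately have "card (insert e (F' - {v}) \<inter> (S - {e})) \<le> card ((F'-{v}) \<inter> T)"
      using card_mono by blast
    then show ?thesis using F'(3) FB by (intro bexI[of _ "insert e (F' - {v})"]) simp_all
  qed
  show ?thesis unfolding LN mingens_def
  proof (intro CollectI conjI allI impI)
    show smono: "is_mono n (sq S)" using is_mono_sq Sn by blast
    have "\<forall>A\<in>PJ. l + 1 \<le> card (A \<inter> S)" using fwd PJ_B by blast
    then have sS: "sq S \<in> symb_pow n (l + 1) (Jm n B)"
      using symb_pow_sq[OF Sn] unfolding PJ_def by blast
    have "mdvd (sq S) (sq S)" using mdvd_sq by blast
    then show "sq S \<in> SF n (l + 1) (Jm n B)"
      unfolding SF_def using smono sS sq_squarefree by blast
    fix m' assume m': "is_mono n m' \<and> m' \<in> SF n (l + 1) (Jm n B) \<and> mdvd m' (sq S)"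
    then obtain s where s: "s \<in> symb_pow n (l+1) (Jm n B)" "squarefree_mono s" "mdvd s m'"
      unfolding SF_def by blast
    define S' where "S' = {i. s i \<noteq> 0}"
    have ssq: "s = sq S'" unfolding S'_def by (rule sq_supp[OF s(2)])
    have "is_mono n s" using s(1) unfolding symb_pow_def by blast
    then have S'n: "S' \<subseteq> {1..n}" unfolding is_mono_def S'_def by blast
    have m'S: "mdvd m' (sq S)" using m' by blast
    have "mdvd (sq S') (sq S)" using s(3) m'S unfolding ssq mdvd_def using le_trans by blast
    then have S'S: "S' \<subseteq> S" using mdvd_sq by blast
    show "m' = sq S"
    proof (cases "S' = S")
      case True
      show ?thesis
      proof
        fix i
        have "sq S i \<le> m' i" using s(3) unfolding ssq True mdvd_def by blast
        moreover have "m' i \<le> sq S i" using m'S unfolding mdvd_def by blast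
        ultimately show "m' i = sq S i" by simp
      qed
    next
      case False
      then obtain e where e: "e \<in> S" "e \<notin> S'" using S'S by blast
      obtain F where F: "F \<in> B" "card (F \<inter> (S - {e})) \<le> l" using bwd e by blast
      obtain A where A: "A \<in> PJ" "A \<subseteq> F" using B_PJ F(1) by blast
      have "sq S' \<in> symb_pow n (l+1) (Jm n B)" using s(1) unfolding ssq .
      then have "l + 1 \<le> card (A \<inter> S')" using symb_pow_sq[OF S'n] A(1) unfolding PJ_def by blast
      moreover have "A \<inter> S' \<subseteq> F \<inter> (S - {e})" using A(2) S'S e(2) by blast
      moreover have "finite (F \<inter> (S - {e}))" using finB[OF F(1)] by simp
      ultimately have "l + 1 \<le> card (F \<inter> (S - {e}))" using card_mono le_trans by blast
      then show ?thesis using F(2) by linarith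
    qed
  qed
qed

end
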